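(* Let $(X,\leq)$ be a poset and $K$ a field, and let $\mathcal{U}_1=\{\alpha\in FI(X,K)\mid \alpha_{xx}=1\text{ for all }x\in X\}$. The following are equivalent: (1) $\mathcal{U}_1$ is solvable; (2) $\mathcal{U}_1$ is nilpotent; (3) $X$ is bounded. Moreover, in this case $\mathcal{U}_1$ has nilpotency class $l(X)$ and derived length $\lceil\log_2(l(X)+1)\rceil$.
   Context: $FI(X,K)$ is the finitary incidence algebra: the $K$-vector space of formal sums $\alpha=\sum_{x\leq y}\alpha_{xy}e_{xy}$ ($x,y\in X$, $\alpha_{xy}\in K$) such that for every pair $x<y$ only finitely many $x\leq u<v\leq y$ have $\alpha_{uv}\neq0$, with convolution product $\alpha\beta=\sum_{x\leq y}\big(\sum_{x\leq z\leq y}\alpha_{xz}\beta_{zy}\big)e_{xy}$ and identity $\delta=\sum_{x}e_{xx}$. $\mathcal{U}_1=\delta+J(FI(X,K))$ is a subgroup of the group of units. The length $l(X)$ is the supremum of $|C|-1$ over finite chains $C\subseteq X$; $X$ is bounded if $l(X)<\infty$. $\lceil t\rceil$ is the ceiling. *)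

theory Defs
  imports Complex_Main "HOL-Algebra.Solvable_Groups" "HOL-Library.Extended_Nat"
begin

text \<open>Finitary incidence algebra FI(X,K) of a poset X (the type 'a with its order)
  over a field K (the type 'k).\<close>

definition FI :: "('a::order \<Rightarrow> 'a \<Rightarrow> 'k::field) set" where
  "FI = {a. (\<forall>x y. \<not> x \<le> y \<longrightarrow> a x y = 0) \<and>
            (\<forall>x y. x < y \<longrightarrow> finite {(u, v). x \<le> u \<and> u < v \<and> v \<le> y \<and> a u v \<noteq> 0})}"

text \<open>Convolution product. The sum is over the (for elements of FI finite) set of
  z in [x,y] with a nonzero summand, which equals the formal sum over x <= z <= y.\<close>

definition fi_mult :: "('a::order \<Rightarrow> 'a \<Rightarrow> 'k::field) \<Rightarrow> ('a \<Rightarrow> 'a \<Rightarrow> 'k) \<Rightarrow> ('a \<Rightarrow> 'a \<Rightarrow> 'k)" where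
  "fi_mult a b = (\<lambda>x y. if x \<le> y
      then (\<Sum>z\<in>{z. x \<le> z \<and> z \<le> y \<and> a x z * b z y \<noteq> 0}. a x z * b z y) else 0)"

definition fi_delta :: "'a::order \<Rightarrow> 'a \<Rightarrow> 'k::field" where
  "fi_delta = (\<lambda>x y. if x = y then 1 else 0)"

definition U1 :: "('a::order \<Rightarrow> 'a \<Rightarrow> 'k::field) monoid" where
  "U1 = \<lparr> carrier = {a \<in> FI. \<forall>x. a x x = 1}, monoid.mult = fi_mult, one = fi_delta \<rparr>"

text \<open>Lower central series, 0-indexed: lcs G 0 = G, lcs G (n+1) = [lcs G n, G].\<close>

fun lcs :: "('g, 'b) monoid_scheme \<Rightarrow> nat \<Rightarrow> 'g set" where
  "lcs G 0 = carrier G"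
| "lcs G (Suc n) = generate G (\<Union>h \<in> lcs G n. \<Union>g \<in> carrier G.
      {h \<otimes>\<^bsub>G\<^esub> g \<otimes>\<^bsub>G\<^esub> inv\<^bsub>G\<^esub> h \<otimes>\<^bsub>G\<^esub> inv\<^bsub>G\<^esub> g})"

definition nilpotent_group :: "('g, 'b) monoid_scheme \<Rightarrow> bool" where
  "nilpotent_group G \<longleftrightarrow> (\<exists>n. lcs G n = {\<one>\<^bsub>G\<^esub>})"

definition nilpotency_class :: "('g, 'b) monoid_scheme \<Rightarrow> nat" where
  "nilpotency_class G = (LEAST n. lcs G n = {\<one>\<^bsub>G\<^esub>})"

definition derived_length :: "('g, 'b) monoid_scheme \<Rightarrow> nat" where
  "derived_length G = (LEAST n. (derived G ^^ n) (carrier G) = {\<one>\<^bsub>G\<^esub>})"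

definition poset_length :: "'a::order itself \<Rightarrow> enat" where
  "poset_length _ = Sup {enat (card C - 1) | C :: 'a set.
      finite C \<and> C \<noteq> {} \<and> Complete_Partial_Order.chain (\<le>) C}"

end

theory Submission
  imports Defs
begin

definition Sp :: "('a::order \<Rightarrow> 'a \<Rightarrow> 'k::field) \<Rightarrow> 'a \<Rightarrow> 'a \<Rightarrow> ('a \<times> 'a) set" where
  "Sp a x y = {(u, v). x \<le> u \<and> u < v \<and> v \<le> y \<and> a u v \<noteq> 0}"

lemma FI_zero: "a \<in> FI \<Longrightarrow> \<not> x \<le> y \<Longrightarrow> a x y = 0"
  unfolding FI_def by auto

lemma finite_Sp: assumes "a \<in> FI" "x \<le> y" shows "finite (Sp a x y)"
proof (cases "x = y")
  case True
  then have "Sp a x y = {}" unfolding Sp_def by auto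
  then show ?thesis by simp
next
  case False
  then have "x < y" using assms by auto
  then show ?thesis using assms unfolding FI_def Sp_def by auto
qed

lemma Sp_mono: "x \<le> x' \<Longrightarrow> y' \<le> y \<Longrightarrow> Sp a x' y' \<subseteq> Sp a x y"
  unfolding Sp_def by (auto intro: order_trans)

lemma fi_mult_sum:
  assumes a: "a \<in> FI" and b: "b \<in> FI" and F: "finite F"
    and sub: "\<And>z. x \<le> z \<Longrightarrow> z \<le> y \<Longrightarrow> a x z * b z y \<noteq> 0 \<Longrightarrow> z \<in> F"
  shows "fi_mult a b x y = (\<Sum>z\<in>F. a x z * b z y)"
proof (cases "x \<le> y")
  case True
  let ?Z = "{z. x \<le> z \<and> z \<le> y \<and> a x z * b z y \<noteq> 0}"
  have "?Z \<subseteq> F" using sub by auto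
  moreover have "\<forall>z\<in>F - ?Z. a x z * b z y = 0"
  proof
    fix z assume z: "z \<in> F - ?Z"
    show "a x z * b z y = 0"
    proof (cases "x \<le> z \<and> z \<le> y")
      case True then show ?thesis using z by auto
    next
      case False then show ?thesis using FI_zero[OF a, of x z] FI_zero[OF b, of z y] by auto
    qed
  qed
  ultimately have "(\<Sum>z\<in>?Z. a x z * b z y) = (\<Sum>z\<in>F. a x z * b z y)"
    using F by (intro sum.mono_neutral_left) auto
  then show ?thesis using True unfolding fi_mult_def by simp
next
  case False
  have "\<forall>z\<in>F. a x z * b z y = 0"
  proof
    fix z assume "z \<in> F"
    show "a x z * b z y = 0"
    proof (cases "x \<le> z")
      case True
      then have "\<not> z \<le> y" using False order_trans by blast
      then show ?thesis using FI_zero[OF b] by simp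
    next
      case False then show ?thesis using FI_zero[OF a] by simp
    qed
  qed
  then have "(\<Sum>z\<in>F. a x z * b z y) = 0" by (intro sum.neutral) simp
  then show ?thesis using False unfolding fi_mult_def by simp
qed

lemma fi_mult_nz:
  assumes "fi_mult a b x y \<noteq> 0"
  shows "x \<le> y \<and> (\<exists>z. x \<le> z \<and> z \<le> y \<and> a x z * b z y \<noteq> 0)"
proof -
  have xy: "x \<le> y" using assms unfolding fi_mult_def by (auto split: if_splits)
  then have "(\<Sum>z\<in>{z. x \<le> z \<and> z \<le> y \<and> a x z * b z y \<noteq> 0}. a x z * b z y) \<noteq> 0"
    using assms unfolding fi_mult_def by simp
  then obtain z where "z \<in> {z. x \<le> z \<and> z \<le> y \<and> a x z * b z y \<noteq> 0}"
    using sum.neutral by (metis (no_types, lifting))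
  then show ?thesis using xy by auto
qed

lemma fi_mult_FI:
  assumes a: "a \<in> FI" and b: "b \<in> FI"
  shows "fi_mult a b \<in> FI"
proof -
  have z: "\<forall>x y. \<not> x \<le> y \<longrightarrow> fi_mult a b x y = 0" unfolding fi_mult_def by auto
  have "finite {(u, v). x \<le> u \<and> u < v \<and> v \<le> y \<and> fi_mult a b u v \<noteq> 0}" if "x < y" for x y
  proof -
    let ?A = "Sp a x y" and ?B = "Sp b x y"
    have fin: "finite ?A" "finite ?B" using finite_Sp[OF a, of x y] finite_Sp[OF b, of x y] that by auto
    have "{(u, v). x \<le> u \<and> u < v \<and> v \<le> y \<and> fi_mult a b u v \<noteq> 0} \<subseteq> ?A \<union> ?B \<union> (fst ` ?A \<times> snd ` ?B)"
    proof safe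
      fix u v assume h: "x \<le> u" "u < v" "v \<le> y" "fi_mult a b u v \<noteq> 0" "(u, v) \<notin> ?A" "(u, v) \<notin> ?B"
      obtain z where z: "u \<le> z" "z \<le> v" "a u z * b z v \<noteq> 0" using fi_mult_nz[OF h(4)] by auto
      have "z \<noteq> u"
      proof
        assume "z = u" then have "b u v \<noteq> 0" using z a unfolding FI_def by auto
        then show False using h unfolding Sp_def by auto
      qed
      moreover have "z \<noteq> v"
      proof
        assume "z = v" then have "a u v \<noteq> 0" using z b unfolding FI_def by auto
        then show False using h unfolding Sp_def by auto
      qed
      ultimately have "(u, z) \<in> ?A" "(z, v) \<in> ?B" using z h unfolding Sp_def
        by (auto intro: order_trans)
      then show "u \<in> fst ` ?A" "v \<in> snd ` ?B" by force+
    qed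
    moreover have "finite (?A \<union> ?B \<union> (fst ` ?A \<times> snd ` ?B))" using fin by auto
    ultimately show ?thesis by (rule finite_subset)
  qed
  then show ?thesis using z unfolding FI_def by auto
qed

lemma fi_mult_assoc:
  assumes a: "a \<in> FI" and b: "b \<in> FI" and c: "c \<in> FI"
  shows "fi_mult (fi_mult a b) c = fi_mult a (fi_mult b c)"
proof (intro ext)
  fix x y
  show "fi_mult (fi_mult a b) c x y = fi_mult a (fi_mult b c) x y"
  proof (cases "x \<le> y")
    case False then show ?thesis unfolding fi_mult_def by simp
  next
    case xy: True
    define S where "S = Sp a x y \<union> Sp b x y \<union> Sp c x y"
    define P where "P = {x, y} \<union> fst ` S \<union> snd ` S"
    have finS: "finite S" unfolding S_def using finite_Sp a b c xy by auto
    have finP: "finite P" unfolding P_def using finS by auto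
    have ab: "fi_mult a b \<in> FI" and bc: "fi_mult b c \<in> FI" using fi_mult_FI assms by auto
    have inner1: "fi_mult a b x w = (\<Sum>z\<in>P. a x z * b z w)" if "w \<le> y" for w
    proof (rule fi_mult_sum[OF a b finP])
      fix z assume z: "x \<le> z" "z \<le> w" "a x z * b z w \<noteq> 0"
      show "z \<in> P"
      proof (cases "z = x")
        case True then show ?thesis unfolding P_def by auto
      next
        case False
        then have "(x, z) \<in> S" using z that unfolding S_def Sp_def by (auto intro: order_trans)
        then show ?thesis unfolding P_def by force
      qed
    qed
    have inner2: "fi_mult b c z y = (\<Sum>w\<in>P. b z w * c w y)" if "x \<le> z" for z
    proof (rule fi_mult_sum[OF b c finP])
      fix w assume w: "z \<le> w" "w \<le> y" "b z w * c w y \<noteq> 0"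
      show "w \<in> P"
      proof (cases "w = y")
        case True then show ?thesis unfolding P_def by auto
      next
        case False
        then have "(w, y) \<in> S" using w that unfolding S_def Sp_def by (auto intro: order_trans)
        then show ?thesis unfolding P_def by force
      qed
    qed
    have "fi_mult (fi_mult a b) c x y = (\<Sum>w\<in>P. fi_mult a b x w * c w y)"
    proof (rule fi_mult_sum[OF ab c finP])
      fix w assume w: "x \<le> w" "w \<le> y" "fi_mult a b x w * c w y \<noteq> 0"
      show "w \<in> P"
      proof (cases "w = y")
        case True then show ?thesis unfolding P_def by auto
      next
        case False
        then have "(w, y) \<in> S" using w unfolding S_def Sp_def by auto
        then show ?thesis unfolding P_def by force
      qed
    qed
    also have "\<dots> = (\<Sum>w\<in>P. (\<Sum>z\<in>P. a x z * b z w) * c w y)"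
    proof (rule sum.cong[OF refl])
      fix w assume "w \<in> P"
      show "fi_mult a b x w * c w y = (\<Sum>z\<in>P. a x z * b z w) * c w y"
      proof (cases "w \<le> y")
        case True then show ?thesis using inner1 by simp
      next
        case False then show ?thesis using FI_zero[OF c] by simp
      qed
    qed
    also have "\<dots> = (\<Sum>w\<in>P. \<Sum>z\<in>P. a x z * b z w * c w y)"
      by (simp add: sum_distrib_right)
    also have "\<dots> = (\<Sum>z\<in>P. \<Sum>w\<in>P. a x z * b z w * c w y)"
      by (rule sum.swap)
    also have "\<dots> = (\<Sum>z\<in>P. a x z * (\<Sum>w\<in>P. b z w * c w y))"
      by (simp add: sum_distrib_left mult.assoc)
    also have "\<dots> = (\<Sum>z\<in>P. a x z * fi_mult b c z y)"
    proof (rule sum.cong[OF refl])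
      fix z assume "z \<in> P"
      show "a x z * (\<Sum>w\<in>P. b z w * c w y) = a x z * fi_mult b c z y"
      proof (cases "x \<le> z")
        case True then show ?thesis using inner2 by simp
      next
        case False then show ?thesis using FI_zero[OF a] by simp
      qed
    qed
    also have "\<dots> = fi_mult a (fi_mult b c) x y"
    proof (rule fi_mult_sum[OF a bc finP, symmetric])
      fix z assume z: "x \<le> z" "z \<le> y" "a x z * fi_mult b c z y \<noteq> 0"
      show "z \<in> P"
      proof (cases "z = x")
        case True then show ?thesis unfolding P_def by auto
      next
        case False
        then have "(x, z) \<in> S" using z unfolding S_def Sp_def by auto
        then show ?thesis unfolding P_def by force
      qed
    qed
    finally show ?thesis .
  qed
qed

lemma delta_FI: "fi_delta \<in> FI"
  unfolding FI_def fi_delta_def by auto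

lemma delta_mult: assumes "a \<in> FI" shows "fi_mult fi_delta a = a"
proof (intro ext)
  fix x y
  have "fi_mult fi_delta a x y = (\<Sum>z\<in>{x}. fi_delta x z * a z y)"
    by (rule fi_mult_sum[OF delta_FI assms]) (auto simp: fi_delta_def split: if_splits)
  then show "fi_mult fi_delta a x y = a x y" by (simp add: fi_delta_def)
qed

lemma mult_delta: assumes "a \<in> FI" shows "fi_mult a fi_delta = a"
proof (intro ext)
  fix x y
  have "fi_mult a fi_delta x y = (\<Sum>z\<in>{y}. a x z * fi_delta z y)"
    by (rule fi_mult_sum[OF assms delta_FI]) (auto simp: fi_delta_def split: if_splits)
  then show "fi_mult a fi_delta x y = a x y" by (simp add: fi_delta_def)
qed

lemma U1_carrier: "carrier U1 = {a \<in> FI. \<forall>x. a x x = 1}"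
  unfolding U1_def by simp

lemma fi_mult_diag: assumes "a \<in> FI" "b \<in> FI" "a x x = 1" "b x x = 1"
  shows "fi_mult a b x x = 1"
proof -
  have "fi_mult a b x x = (\<Sum>z\<in>{x}. a x z * b z x)"
    by (rule fi_mult_sum[OF assms(1,2)]) (auto dest: antisym)
  then show ?thesis using assms by simp
qed

lemma FI_iff: "a \<in> FI \<longleftrightarrow> (\<forall>x y. \<not> x \<le> y \<longrightarrow> a x y = 0) \<and> (\<forall>x y. x < y \<longrightarrow> finite (Sp a x y))"
  unfolding FI_def Sp_def by simp

function linv :: "('a::order \<Rightarrow> 'a \<Rightarrow> 'k::field) \<Rightarrow> 'a \<Rightarrow> 'a \<Rightarrow> 'k" where
  "linv a x y = (if x = y then 1 else if a \<in> FI \<and> x < y then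
     - (\<Sum>z\<in>{z. x \<le> z \<and> z < y \<and> a z y \<noteq> 0}. linv a x z * a z y) else 0)"
  by auto
termination
proof (relation "measure (\<lambda>(a,x,y). card (Sp a x y))", simp)
  fix a :: "'a::order \<Rightarrow> 'a \<Rightarrow> 'k::field" and x y z
  assume h: "x \<noteq> y" "a \<in> FI \<and> x < y" "z \<in> {z. x \<le> z \<and> z < y \<and> a z y \<noteq> 0}"
  have "finite (Sp a x y)" using h by (intro finite_Sp) auto
  moreover have "Sp a x z \<subset> Sp a x y"
  proof
    show "Sp a x z \<subseteq> Sp a x y" using h by (intro Sp_mono) auto
    have "(z, y) \<in> Sp a x y" "(z, y) \<notin> Sp a x z" using h unfolding Sp_def by auto
    then show "Sp a x z \<noteq> Sp a x y" by blast
  qed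
  ultimately show "((a, x, z), a, x, y) \<in> measure (\<lambda>(a, x, y). card (Sp a x y))"
    by (simp add: psubset_card_mono)
qed

declare linv.simps[simp del]

lemma linv_nz_right:
  assumes "linv a x y \<noteq> 0" "x \<noteq> y"
  shows "\<exists>w. x \<le> w \<and> w < y \<and> a w y \<noteq> 0"
proof -
  have c: "a \<in> FI \<and> x < y" using assms linv.simps[of a x y] by (auto split: if_splits)
  then have "(\<Sum>z\<in>{z. x \<le> z \<and> z < y \<and> a z y \<noteq> 0}. linv a x z * a z y) \<noteq> 0"
    using assms linv.simps[of a x y] by auto
  then obtain z where "z \<in> {z. x \<le> z \<and> z < y \<and> a z y \<noteq> 0}"
    using sum.neutral by (metis (no_types, lifting))
  then show ?thesis by auto
qed

lemma linv_nz_left: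
  "linv a x y \<noteq> 0 \<Longrightarrow> x \<noteq> y \<Longrightarrow> \<exists>w. x < w \<and> w \<le> y \<and> a x w \<noteq> 0"
proof (induction a x y rule: linv.induct)
  case (1 a x y)
  have c: "a \<in> FI \<and> x < y" using 1(2,3) linv.simps[of a x y] by (auto split: if_splits)
  then have "(\<Sum>z\<in>{z. x \<le> z \<and> z < y \<and> a z y \<noteq> 0}. linv a x z * a z y) \<noteq> 0"
    using 1(2,3) linv.simps[of a x y] by auto
  then obtain z where z: "z \<in> {z. x \<le> z \<and> z < y \<and> a z y \<noteq> 0}" "linv a x z * a z y \<noteq> 0"
    using sum.neutral by (metis (no_types, lifting))
  show ?case
  proof (cases "z = x")
    case True then show ?thesis using z c by auto
  next
    case False
    then obtain w where "x < w \<and> w \<le> z \<and> a x w \<noteq> 0" using 1(1)[OF _ _ z(1)] z c by auto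
    then show ?thesis using z by (auto intro: order_trans)
  qed
qed

lemma linv_FI: assumes a: "a \<in> FI" shows "linv a \<in> FI"
  unfolding FI_iff
proof safe
  fix x y :: 'a assume "\<not> x \<le> y"
  then show "linv a x y = 0" using linv.simps[of a x y] by auto
next
  fix x y :: 'a assume xy: "x < y"
  have "Sp (linv a) x y \<subseteq> fst ` Sp a x y \<times> snd ` Sp a x y"
  proof safe
    fix u v assume uv: "(u, v) \<in> Sp (linv a) x y"
    then have h: "x \<le> u" "u < v" "v \<le> y" "linv a u v \<noteq> 0" unfolding Sp_def by auto
    obtain w where w: "u < w" "w \<le> v" "a u w \<noteq> 0" using linv_nz_left[OF h(4)] h by auto
    obtain w' where w': "u \<le> w'" "w' < v" "a w' v \<noteq> 0" using linv_nz_right[OF h(4)] h by auto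
    have "(u, w) \<in> Sp a x y" "(w', v) \<in> Sp a x y" using w w' h unfolding Sp_def
      by (auto intro: order_trans)
    then show "u \<in> fst ` Sp a x y" "v \<in> snd ` Sp a x y" by force+
  qed
  moreover have "finite (fst ` Sp a x y \<times> snd ` Sp a x y)" using finite_Sp[OF a] xy by auto
  ultimately show "finite (Sp (linv a) x y)" by (rule finite_subset)
qed

lemma linv_left:
  assumes a: "a \<in> FI" and d: "\<forall>x. a x x = 1"
  shows "fi_mult (linv a) a = fi_delta"
proof (intro ext)
  fix x y
  have l: "linv a \<in> FI" using linv_FI[OF a] .
  show "fi_mult (linv a) a x y = fi_delta x y"
  proof (cases "x \<le> y")
    case False
    then show ?thesis unfolding fi_mult_def fi_delta_def by auto
  next
    case True
    show ?thesis
    proof (cases "x = y")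
      case True
      have "fi_mult (linv a) a x y = (\<Sum>z\<in>{x}. linv a x z * a z y)"
        by (rule fi_mult_sum[OF l a]) (use True in \<open>auto dest: antisym\<close>)
      then show ?thesis using True d by (simp add: fi_delta_def linv.simps)
    next
      case False
      then have xy: "x < y" using True by auto
      define Z where "Z = {z. x \<le> z \<and> z < y \<and> a z y \<noteq> 0}"
      have finZ: "finite Z"
      proof -
        have "Z \<subseteq> fst ` Sp a x y" unfolding Z_def Sp_def by force
        then show ?thesis using finite_Sp[OF a] xy by (meson finite_imageI finite_subset less_imp_le)
      qed
      have "fi_mult (linv a) a x y = (\<Sum>z\<in>insert y Z. linv a x z * a z y)"
        by (rule fi_mult_sum[OF l a]) (use finZ in \<open>auto simp: Z_def\<close>)
      also have "\<dots> = linv a x y * a y y + (\<Sum>z\<in>Z. linv a x z * a z y)"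
        using finZ by (simp add: Z_def)
      also have "\<dots> = 0" using d linv.simps[of a x y] False xy a by (simp add: Z_def)
      finally show ?thesis using False by (simp add: fi_delta_def)
    qed
  qed
qed

lemma group_U1: "group (U1 :: ('a::order \<Rightarrow> 'a \<Rightarrow> 'k::field) monoid)"
proof (rule groupI)
  fix x y z :: "'a \<Rightarrow> 'a \<Rightarrow> 'k"
  show "x \<in> carrier U1 \<Longrightarrow> y \<in> carrier U1 \<Longrightarrow> x \<otimes>\<^bsub>U1\<^esub> y \<in> carrier U1"
    unfolding U1_def by (auto intro: fi_mult_FI fi_mult_diag)
  show "x \<in> carrier U1 \<Longrightarrow> y \<in> carrier U1 \<Longrightarrow> z \<in> carrier U1 \<Longrightarrow>
    x \<otimes>\<^bsub>U1\<^esub> y \<otimes>\<^bsub>U1\<^esub> z = x \<otimes>\<^bsub>U1\<^esub> (y \<otimes>\<^bsub>U1\<^esub> z)"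
    unfolding U1_def by (auto intro: fi_mult_assoc)
  show "\<one>\<^bsub>U1\<^esub> \<in> carrier U1" unfolding U1_def using delta_FI by (auto simp: fi_delta_def)
  show "x \<in> carrier U1 \<Longrightarrow> \<one>\<^bsub>U1\<^esub> \<otimes>\<^bsub>U1\<^esub> x = x"
    unfolding U1_def by (auto intro: delta_mult)
  assume x: "x \<in> carrier U1"
  then have xx: "x \<in> FI" "\<forall>u. x u u = 1" unfolding U1_def by auto
  show "\<exists>y\<in>carrier U1. y \<otimes>\<^bsub>U1\<^esub> x = \<one>\<^bsub>U1\<^esub>"
  proof (intro bexI)
    show "linv x \<otimes>\<^bsub>U1\<^esub> x = \<one>\<^bsub>U1\<^esub>" using linv_left[OF xx] unfolding U1_def by simp
    show "linv x \<in> carrier U1" using linv_FI[OF xx(1)] unfolding U1_def by (auto simp: linv.simps)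
  qed
qed

fun lc :: "'a::order \<Rightarrow> 'a \<Rightarrow> nat \<Rightarrow> bool" where
  "lc x y 0 = (x = y)"
| "lc x y (Suc k) = (\<exists>z. x < z \<and> lc z y k)"

lemma lc_le: "lc x y k \<Longrightarrow> x \<le> y"
  by (induction k arbitrary: x) (auto, meson dual_order.trans less_imp_le)

lemma lc_less: "lc x y (Suc k) \<Longrightarrow> x < y"
  using lc_le by (auto intro: less_le_trans)

lemma lc_one: "lc x y (Suc 0) \<longleftrightarrow> x < y" by simp

lemma lc_add: "lc x y i \<Longrightarrow> lc y z j \<Longrightarrow> lc x z (i + j)"
  by (induction i arbitrary: x) auto

lemma lc_split: "lc x z (i + j) \<Longrightarrow> \<exists>y. lc x y i \<and> lc y z j"
  by (induction i arbitrary: x) (auto, meson)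

lemma lc_drop: "lc x y (Suc (Suc k)) \<Longrightarrow> lc x y (Suc k)"
proof -
  assume "lc x y (Suc (Suc k))"
  then obtain z w where "x < z" "z < w" "lc w y k" by auto
  then show ?thesis by (auto intro: less_trans)
qed

lemma lc_mono: "lc x y m \<Longrightarrow> 1 \<le> k \<Longrightarrow> k \<le> m \<Longrightarrow> lc x y k"
proof (induction m)
  case 0 then show ?case by simp
next
  case (Suc m)
  show ?case
  proof (cases "k = Suc m")
    case True then show ?thesis using Suc by simp
  next
    case False
    then have "k \<le> m" "1 \<le> m" using Suc by auto
    then obtain m' where "m = Suc m'" by (cases m) auto
    then have "lc x y m" using lc_drop Suc.prems(1) by metis
    then show ?thesis using Suc \<open>k \<le> m\<close> by auto
  qed
qed

definition Gam :: "nat \<Rightarrow> ('a::order \<Rightarrow> 'a \<Rightarrow> 'k::field) set" where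
  "Gam k = {a \<in> carrier U1. \<forall>x y. x \<noteq> y \<longrightarrow> a x y \<noteq> 0 \<longrightarrow> lc x y k}"

lemma carrier_FI: "a \<in> carrier U1 \<Longrightarrow> a \<in> FI" unfolding U1_def by simp
lemma carrier_diag: "a \<in> carrier U1 \<Longrightarrow> a x x = 1" unfolding U1_def by simp
lemma U1_mult: "a \<otimes>\<^bsub>U1\<^esub> b = fi_mult a b" unfolding U1_def by simp
lemma U1_one: "\<one>\<^bsub>U1\<^esub> = fi_delta" unfolding U1_def by simp

lemma GL:
  fixes c d :: "'a::order \<Rightarrow> 'a \<Rightarrow> 'k::field"
  assumes c: "c \<in> FI" "\<And>x. c x x = 1" and d: "d \<in> FI" "\<And>x. d x x = 1"
    and Q1: "\<And>x y. x < y \<Longrightarrow> fi_mult c d x y \<noteq> d x y \<Longrightarrow> Q x y"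
    and Q2: "\<And>x z y. x < z \<Longrightarrow> z < y \<Longrightarrow> Q x z \<Longrightarrow> d z y \<noteq> 0 \<Longrightarrow> Q x y"
  shows "x < y \<Longrightarrow> c x y \<noteq> 0 \<Longrightarrow> Q x y"
proof (induction "card (Sp d x y)" arbitrary: y rule: less_induct)
  case less
  define Z where "Z = {z. x < z \<and> z < y \<and> c x z * d z y \<noteq> 0}"
  have finSp: "finite (Sp d x y)" using less by (intro finite_Sp[OF d(1)]) auto
  have finZ: "finite Z"
  proof -
    have "Z \<subseteq> fst ` Sp d x y" unfolding Z_def Sp_def by force
    then show ?thesis using finSp by (meson finite_imageI finite_subset)
  qed
  have xZ: "x \<notin> Z" "y \<notin> Z" "x \<noteq> y" using less unfolding Z_def by auto
  have "fi_mult c d x y = (\<Sum>z\<in>insert x (insert y Z). c x z * d z y)"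
    by (rule fi_mult_sum[OF c(1) d(1)]) (use finZ in \<open>auto simp: Z_def order.order_iff_strict\<close>)
  also have "\<dots> = d x y + c x y + (\<Sum>z\<in>Z. c x z * d z y)"
    using finZ xZ c(2) d(2) by simp
  finally have eq: "fi_mult c d x y = d x y + c x y + (\<Sum>z\<in>Z. c x z * d z y)" .
  show ?case
  proof (rule ccontr)
    assume nQ: "\<not> Q x y"
    then have "fi_mult c d x y = d x y" using Q1 less by blast
    then have "(\<Sum>z\<in>Z. c x z * d z y) \<noteq> 0" using eq less
      by (metis add_cancel_right_right add_diff_cancel_left' diff_0 minus_equation_iff neg_0_equal_iff_equal)
    then obtain z where z: "z \<in> Z" "c x z * d z y \<noteq> 0"
      using sum.neutral by (metis (no_types, lifting))
    have "Sp d x z \<subset> Sp d x y"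
    proof
      show "Sp d x z \<subseteq> Sp d x y" using z by (intro Sp_mono) (auto simp: Z_def)
      have "(z, y) \<in> Sp d x y" "(z, y) \<notin> Sp d x z" using z unfolding Sp_def Z_def by auto
      then show "Sp d x z \<noteq> Sp d x y" by blast
    qed
    then have "card (Sp d x z) < card (Sp d x y)" using finSp by (simp add: psubset_card_mono)
    then have "Q x z" using less(1) z unfolding Z_def by auto
    then have "Q x y" using Q2 z unfolding Z_def by auto
    then show False using nQ by simp
  qed
qed


lemma Gam_sub: "Gam k \<subseteq> carrier U1" unfolding Gam_def by auto

lemma Gam_subgroup:
  assumes k: "1 \<le> k"
  shows "subgroup (Gam k :: ('a::order \<Rightarrow> 'a \<Rightarrow> 'k::field) set) U1"
proof -
  interpret G: group "U1 :: ('a \<Rightarrow> 'a \<Rightarrow> 'k) monoid" by (rule group_U1)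
  show ?thesis
  proof (rule G.subgroupI)
    show "Gam k \<subseteq> carrier U1" by (rule Gam_sub)
    have "(fi_delta :: 'a \<Rightarrow> 'a \<Rightarrow> 'k) \<in> Gam k" unfolding Gam_def using G.one_closed by (auto simp: U1_one fi_delta_def)
    then show "(Gam k :: ('a \<Rightarrow> 'a \<Rightarrow> 'k) set) \<noteq> {}" by auto
  next
    fix a b :: "'a \<Rightarrow> 'a \<Rightarrow> 'k" assume a: "a \<in> Gam k" and b: "b \<in> Gam k"
    have ac: "a \<in> carrier U1" and bc: "b \<in> carrier U1" using a b Gam_sub by auto
    show "a \<otimes>\<^bsub>U1\<^esub> b \<in> Gam k" unfolding Gam_def
    proof (intro CollectI conjI allI impI)
      show "a \<otimes>\<^bsub>U1\<^esub> b \<in> carrier U1" using ac bc by simp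
      fix x y assume xy: "x \<noteq> y" "(a \<otimes>\<^bsub>U1\<^esub> b) x y \<noteq> 0"
      then obtain z where z: "x \<le> z" "z \<le> y" "a x z * b z y \<noteq> 0"
        using fi_mult_nz[of a b x y] by (auto simp: U1_mult)
      show "lc x y k"
      proof (cases "z = x")
        case True then show ?thesis using z b xy unfolding Gam_def by auto
      next
        case False
        show ?thesis
        proof (cases "z = y")
          case True then show ?thesis using z a xy unfolding Gam_def by auto
        next
          case False
          then have "lc x z k" "lc z y k" using z a b \<open>z \<noteq> x\<close> unfolding Gam_def by auto
          then have "lc x y (k + k)" by (rule lc_add)
          from lc_mono[OF this k] show ?thesis by simp
        qed
      qed
    qed
  next
    fix a :: "'a \<Rightarrow> 'a \<Rightarrow> 'k" assume a: "a \<in> Gam k"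
    have ac: "a \<in> carrier U1" using a Gam_sub by auto
    let ?c = "inv\<^bsub>U1\<^esub> a"
    have cc: "?c \<in> carrier U1" using ac by simp
    have cd: "fi_mult ?c a = fi_delta" using G.l_inv[OF ac] by (simp add: U1_mult U1_one)
    have main: "lc x y k" if "x < y" "?c x y \<noteq> 0" for x y
    proof (rule GL[OF carrier_FI[OF cc] carrier_diag[OF cc] carrier_FI[OF ac] carrier_diag[OF ac] _ _ that])
      fix x y assume h: "x < y" "fi_mult ?c a x y \<noteq> a x y"
      then have "x \<noteq> y" by simp
      then have "a x y \<noteq> 0" using h unfolding cd fi_delta_def by simp
      then show "lc x y k" using a \<open>x \<noteq> y\<close> unfolding Gam_def by blast
    next
      fix x z y assume h: "x < z" "z < y" "lc x z k" "a z y \<noteq> 0"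
      then have "lc z y k" using a unfolding Gam_def by auto
      then have "lc x y (k + k)" using h lc_add by blast
      from lc_mono[OF this k] show "lc x y k" by simp
    qed
    show "?c \<in> Gam k" unfolding Gam_def
    proof (intro CollectI conjI allI impI cc)
      fix x y assume "x \<noteq> y" "?c x y \<noteq> 0"
      moreover then have "x \<le> y" using FI_zero[OF carrier_FI[OF cc]] by blast
      ultimately show "lc x y k" using main by auto
    qed
  qed
qed

lemma comm_entry:
  fixes a b :: "'a::order \<Rightarrow> 'a \<Rightarrow> 'k::field"
  assumes a: "a \<in> Gam i" and b: "b \<in> Gam j" and xy: "x < y"
    and ne: "fi_mult a b x y \<noteq> fi_mult b a x y"
  shows "lc x y (i + j)"
proof -
  have aF: "a \<in> FI" and bF: "b \<in> FI" using a b Gam_sub carrier_FI by blast+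
  have ad: "\<And>x. a x x = 1" and bd: "\<And>x. b x x = 1" using a b Gam_sub carrier_diag by blast+
  define Z where "Z = {z. x < z \<and> z < y \<and> (a x z * b z y \<noteq> 0 \<or> b x z * a z y \<noteq> 0)}"
  have finZ: "finite Z"
  proof -
    have "Z \<subseteq> snd ` Sp a x y \<union> snd ` Sp b x y" unfolding Z_def Sp_def by force
    moreover have "finite (snd ` Sp a x y \<union> snd ` Sp b x y)"
      using finite_Sp[OF aF] finite_Sp[OF bF] xy by auto
    ultimately show ?thesis by (rule finite_subset)
  qed
  have xZ: "x \<notin> Z" "y \<notin> Z" "x \<noteq> y" using xy unfolding Z_def by auto
  have "fi_mult a b x y = (\<Sum>z\<in>insert x (insert y Z). a x z * b z y)"
    by (rule fi_mult_sum[OF aF bF]) (use finZ in \<open>auto simp: Z_def order.order_iff_strict\<close>)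
  also have "\<dots> = b x y + a x y + (\<Sum>z\<in>Z. a x z * b z y)"
    using finZ xZ ad bd by simp
  finally have e1: "fi_mult a b x y = b x y + a x y + (\<Sum>z\<in>Z. a x z * b z y)" .
  have "fi_mult b a x y = (\<Sum>z\<in>insert x (insert y Z). b x z * a z y)"
    by (rule fi_mult_sum[OF bF aF]) (use finZ in \<open>auto simp: Z_def order.order_iff_strict\<close>)
  also have "\<dots> = a x y + b x y + (\<Sum>z\<in>Z. b x z * a z y)"
    using finZ xZ ad bd by simp
  finally have e2: "fi_mult b a x y = a x y + b x y + (\<Sum>z\<in>Z. b x z * a z y)" .
  have "(\<Sum>z\<in>Z. a x z * b z y) \<noteq> (\<Sum>z\<in>Z. b x z * a z y)" using e1 e2 ne by (simp add: add.commute)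
  then obtain z where z: "z \<in> Z" "a x z * b z y \<noteq> b x z * a z y"
    by (meson sum.cong)
  then have zz: "x < z" "z < y" unfolding Z_def by auto
  show ?thesis
  proof (cases "a x z * b z y \<noteq> 0")
    case True
    then have "lc x z i" "lc z y j" using a b zz unfolding Gam_def by auto
    then show ?thesis by (rule lc_add)
  next
    case False
    then have "b x z * a z y \<noteq> 0" using z by auto
    then have "lc x z j" "lc z y i" using a b zz unfolding Gam_def by auto
    then have "lc x y (j + i)" by (rule lc_add)
    then show ?thesis by (simp add: add.commute)
  qed
qed

lemma comm_Gam:
  fixes a b :: "'a::order \<Rightarrow> 'a \<Rightarrow> 'k::field"
  assumes a: "a \<in> Gam i" and b: "b \<in> Gam j" and ij: "1 \<le> i + j"
  shows "a \<otimes>\<^bsub>U1\<^esub> b \<otimes>\<^bsub>U1\<^esub> inv\<^bsub>U1\<^esub> a \<otimes>\<^bsub>U1\<^esub> inv\<^bsub>U1\<^esub> b \<in> Gam (i + j)"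
proof -
  interpret G: group "U1 :: ('a \<Rightarrow> 'a \<Rightarrow> 'k) monoid" by (rule group_U1)
  have ac: "a \<in> carrier U1" and bc: "b \<in> carrier U1" using a b Gam_sub by auto
  define c where "c = a \<otimes>\<^bsub>U1\<^esub> b \<otimes>\<^bsub>U1\<^esub> inv\<^bsub>U1\<^esub> a \<otimes>\<^bsub>U1\<^esub> inv\<^bsub>U1\<^esub> b"
  define d where "d = b \<otimes>\<^bsub>U1\<^esub> a"
  have cc: "c \<in> carrier U1" and dc: "d \<in> carrier U1" unfolding c_def d_def using ac bc by auto
  have ib: "inv\<^bsub>U1\<^esub> b \<otimes>\<^bsub>U1\<^esub> (b \<otimes>\<^bsub>U1\<^esub> a) = a"
    using ac bc by (simp add: G.m_assoc[symmetric])
  have "c \<otimes>\<^bsub>U1\<^esub> d = a \<otimes>\<^bsub>U1\<^esub> b" unfolding c_def d_def using ac bc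
    by (simp add: G.m_assoc ib)
  then have cd: "fi_mult c d = fi_mult a b" by (simp add: U1_mult)
  have main: "lc x y (i + j)" if "x < y" "c x y \<noteq> 0" for x y
  proof (rule GL[OF carrier_FI[OF cc] carrier_diag[OF cc] carrier_FI[OF dc] carrier_diag[OF dc] _ _ that])
    fix x y assume "x < y" "fi_mult c d x y \<noteq> d x y"
    moreover have "d = fi_mult b a" by (simp add: d_def U1_mult)
    ultimately show "lc x y (i + j)" using comm_entry[OF a b] cd by auto
  next
    fix x z y assume h: "x < z" "z < y" "lc x z (i + j)" "d z y \<noteq> 0"
    then have "lc z y 1" by simp
    then have "lc x y (i + j + 1)" using h lc_add by blast
    from lc_mono[OF this ij] show "lc x y (i + j)" by simp
  qed
  show ?thesis unfolding c_def[symmetric] Gam_def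
  proof (intro CollectI conjI allI impI cc)
    fix x y assume "x \<noteq> y" "c x y \<noteq> 0"
    moreover then have "x \<le> y" using FI_zero[OF carrier_FI[OF cc]] by blast
    ultimately show "lc x y (i + j)" using main by auto
  qed
qed

lemma Gam_one: "(Gam 1 :: ('a::order \<Rightarrow> 'a \<Rightarrow> 'k::field) set) = carrier U1"
proof
  show "(Gam 1 :: ('a \<Rightarrow> 'a \<Rightarrow> 'k) set) \<subseteq> carrier U1" by (rule Gam_sub)
  show "carrier U1 \<subseteq> (Gam 1 :: ('a \<Rightarrow> 'a \<Rightarrow> 'k) set)"
  proof
    fix a :: "'a \<Rightarrow> 'a \<Rightarrow> 'k" assume a: "a \<in> carrier U1"
    have "\<forall>x y. x \<noteq> y \<longrightarrow> a x y \<noteq> 0 \<longrightarrow> lc x y 1"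
    proof (intro allI impI)
      fix x y assume "x \<noteq> y" "a x y \<noteq> 0"
      moreover then have "x \<le> y" using FI_zero[OF carrier_FI[OF a]] by blast
      ultimately show "lc x y 1" by simp
    qed
    then show "a \<in> Gam 1" unfolding Gam_def using a by simp
  qed
qed

lemma Gam_Suc0: "(Gam (Suc 0) :: ('a::order \<Rightarrow> 'a \<Rightarrow> 'k::field) set) = carrier U1"
  using Gam_one by (metis One_nat_def)

lemma lcs_Gam: "lcs (U1 :: ('a::order \<Rightarrow> 'a \<Rightarrow> 'k::field) monoid) n \<subseteq> Gam (Suc n)"
proof (induction n)
  case 0 then show ?case by (simp add: Gam_Suc0)
next
  case (Suc n)
  interpret G: group "U1 :: ('a \<Rightarrow> 'a \<Rightarrow> 'k) monoid" by (rule group_U1)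
  show ?case unfolding lcs.simps
  proof (rule G.generate_subgroup_incl)
    show "subgroup (Gam (Suc (Suc n))) (U1 :: ('a \<Rightarrow> 'a \<Rightarrow> 'k) monoid)" by (rule Gam_subgroup) simp
    show "(\<Union>h\<in>lcs U1 n. \<Union>g\<in>carrier U1. {h \<otimes>\<^bsub>U1\<^esub> g \<otimes>\<^bsub>U1\<^esub> inv\<^bsub>U1\<^esub> h \<otimes>\<^bsub>U1\<^esub> inv\<^bsub>U1\<^esub> g})
        \<subseteq> (Gam (Suc (Suc n)) :: ('a \<Rightarrow> 'a \<Rightarrow> 'k) set)"
    proof safe
      fix h g :: "'a \<Rightarrow> 'a \<Rightarrow> 'k" assume h: "h \<in> lcs U1 n" and g: "g \<in> carrier U1"
      have "h \<in> Gam (Suc n)" using h Suc by auto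
      moreover have "g \<in> Gam 1" using g Gam_one by auto
      ultimately have "h \<otimes>\<^bsub>U1\<^esub> g \<otimes>\<^bsub>U1\<^esub> inv\<^bsub>U1\<^esub> h \<otimes>\<^bsub>U1\<^esub> inv\<^bsub>U1\<^esub> g \<in> Gam (Suc n + 1)"
        by (intro comm_Gam) auto
      then show "h \<otimes>\<^bsub>U1\<^esub> g \<otimes>\<^bsub>U1\<^esub> inv\<^bsub>U1\<^esub> h \<otimes>\<^bsub>U1\<^esub> inv\<^bsub>U1\<^esub> g \<in> Gam (Suc (Suc n))" by simp
    qed
  qed
qed

lemma derived_Gam: "(derived (U1 :: ('a::order \<Rightarrow> 'a \<Rightarrow> 'k::field) monoid) ^^ n) (carrier U1) \<subseteq> Gam (2 ^ n)"
proof (induction n)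
  case 0 then show ?case by (simp add: Gam_Suc0)
next
  case (Suc n)
  interpret G: group "U1 :: ('a \<Rightarrow> 'a \<Rightarrow> 'k) monoid" by (rule group_U1)
  have eq: "(derived U1 ^^ Suc n) (carrier U1) = generate U1 (derived_set U1 ((derived (U1 :: ('a \<Rightarrow> 'a \<Rightarrow> 'k) monoid) ^^ n) (carrier U1)))"
    by (simp only: funpow.simps comp_def derived_def[of U1 "(derived U1 ^^ n) (carrier U1)"])
  show ?case unfolding eq
  proof (rule G.generate_subgroup_incl)
    show "subgroup (Gam (2 ^ Suc n)) (U1 :: ('a \<Rightarrow> 'a \<Rightarrow> 'k) monoid)" by (rule Gam_subgroup) simp
    have "h \<otimes>\<^bsub>U1\<^esub> g \<otimes>\<^bsub>U1\<^esub> inv\<^bsub>U1\<^esub> h \<otimes>\<^bsub>U1\<^esub> inv\<^bsub>U1\<^esub> g \<in> Gam (2 ^ Suc n)"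
      if h: "h \<in> (derived U1 ^^ n) (carrier U1)"
        and g: "g \<in> (derived U1 ^^ n) (carrier U1)" for h g :: "'a \<Rightarrow> 'a \<Rightarrow> 'k"
    proof -
      have "h \<in> Gam (2 ^ n)" "g \<in> Gam (2 ^ n)" using h g Suc by auto
      moreover have "1 \<le> 2 ^ n + (2 ^ n :: nat)" by (simp add: Suc_leI)
      ultimately have "h \<otimes>\<^bsub>U1\<^esub> g \<otimes>\<^bsub>U1\<^esub> inv\<^bsub>U1\<^esub> h \<otimes>\<^bsub>U1\<^esub> inv\<^bsub>U1\<^esub> g \<in> Gam (2 ^ n + 2 ^ n)"
        by (intro comm_Gam) auto
      then show ?thesis by (simp add: mult_2)
    qed
    then show "derived_set U1 ((derived U1 ^^ n) (carrier U1)) \<subseteq> (Gam (2 ^ Suc n) :: ('a \<Rightarrow> 'a \<Rightarrow> 'k) set)"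
      by blast
  qed
qed

definition tm :: "'a::order \<Rightarrow> 'a \<Rightarrow> 'k::field \<Rightarrow> 'a \<Rightarrow> 'a \<Rightarrow> 'k" where
  "tm x y c = (\<lambda>u v. if u = v then 1 else if u = x \<and> v = y then c else 0)"

lemma tm_carrier: assumes "x < y" shows "tm x y c \<in> carrier U1"
proof -
  have "Sp (tm x y c) u v \<subseteq> {(x, y)}" for u v unfolding Sp_def tm_def by auto
  then have "finite (Sp (tm x y c) u v)" for u v by (meson finite.emptyI finite_insert finite_subset)
  moreover have "\<not> u \<le> v \<Longrightarrow> tm x y c u v = 0" for u v using assms unfolding tm_def by auto
  ultimately show ?thesis unfolding U1_carrier FI_iff by (auto simp: tm_def)
qed

lemma tm_right:
  assumes f: "f \<in> FI" and xy: "x < y"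
  shows "fi_mult f (tm x y c) = (\<lambda>u v. f u v + (if v = y then f u x * c else 0))"
proof (intro ext)
  fix u v
  have tF: "tm x y c \<in> FI" using tm_carrier[OF xy] carrier_FI by blast
  have "fi_mult f (tm x y c) u v = (\<Sum>z\<in>{v, x}. f u z * tm x y c z v)"
    by (rule fi_mult_sum[OF f tF]) (auto simp: tm_def split: if_splits)
  also have "\<dots> = f u v + (if v = y then f u x * c else 0)"
    using xy by (cases "v = x") (auto simp: tm_def)
  finally show "fi_mult f (tm x y c) u v = f u v + (if v = y then f u x * c else 0)" .
qed

lemma tm_inv:
  assumes xy: "x < y"
  shows "inv\<^bsub>U1\<^esub> (tm x y c) = (tm x y (- c) :: 'a::order \<Rightarrow> 'a \<Rightarrow> 'k::field)"
proof -
  interpret G: group "U1 :: ('a \<Rightarrow> 'a \<Rightarrow> 'k) monoid" by (rule group_U1)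
  have "fi_mult (tm x y (- c)) (tm x y c) = (fi_delta :: 'a \<Rightarrow> 'a \<Rightarrow> 'k)"
    unfolding tm_right[OF carrier_FI[OF tm_carrier[OF xy]] xy]
    using xy by (intro ext) (auto simp: tm_def fi_delta_def)
  then show ?thesis using tm_carrier[OF xy]
    by (intro G.inv_equality) (auto simp: U1_mult U1_one)
qed

lemma tm_comm:
  assumes xy: "x < y" and yz: "y < z"
  shows "tm x y a \<otimes>\<^bsub>U1\<^esub> tm y z b \<otimes>\<^bsub>U1\<^esub> inv\<^bsub>U1\<^esub> (tm x y a) \<otimes>\<^bsub>U1\<^esub> inv\<^bsub>U1\<^esub> (tm y z b)
    = (tm x z (a * b) :: 'a::order \<Rightarrow> 'a \<Rightarrow> 'k::field)"
proof -
  have xz: "x < z" using xy yz by auto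
  have F: "\<And>x y c. x < y \<Longrightarrow> (tm x y c :: 'a \<Rightarrow> 'a \<Rightarrow> 'k) \<in> FI" using tm_carrier carrier_FI by blast
  define p1 where "p1 = fi_mult (tm x y a) (tm y z b :: 'a \<Rightarrow> 'a \<Rightarrow> 'k)"
  define p2 where "p2 = fi_mult p1 (tm x y (- a))"
  define p3 where "p3 = fi_mult p2 (tm y z (- b))"
  have p1F: "p1 \<in> FI" unfolding p1_def using F xy yz by (intro fi_mult_FI) auto
  have p2F: "p2 \<in> FI" unfolding p2_def using F xy p1F by (intro fi_mult_FI) auto
  have e1: "p1 = (\<lambda>u v. tm x y a u v + (if v = z then tm x y a u y * b else 0))"
    unfolding p1_def by (rule tm_right[OF F[OF xy] yz])
  have e2: "p2 = (\<lambda>u v. p1 u v + (if v = y then p1 u x * (- a) else 0))"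
    unfolding p2_def by (rule tm_right[OF p1F xy])
  have e3: "p3 = (\<lambda>u v. p2 u v + (if v = z then p2 u y * (- b) else 0))"
    unfolding p3_def by (rule tm_right[OF p2F yz])
  have "p3 = tm x z (a * b)"
    unfolding e3 e2 e1 using xy yz xz by (intro ext) (auto simp: tm_def)
  then show ?thesis unfolding p3_def p2_def p1_def using xy yz
    by (simp add: tm_inv U1_mult)
qed

lemma tm_ne: "x \<noteq> y \<Longrightarrow> tm x y (1::'k::field) \<noteq> fi_delta"
  unfolding tm_def fi_delta_def by (metis zero_neq_one)

lemma lcs_tm: "lc x y (Suc n) \<Longrightarrow> tm x y c \<in> lcs (U1 :: ('a::order \<Rightarrow> 'a \<Rightarrow> 'k::field) monoid) n"
proof (induction n arbitrary: y c)
  case 0 then show ?case using tm_carrier by simp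
next
  case (Suc n)
  have "lc x y (Suc n + 1)" using Suc.prems by simp
  then obtain w where w: "lc x w (Suc n)" "lc w y 1" using lc_split by blast
  have xw: "x < w" and wy: "w < y" using w lc_less by auto
  have h: "tm x w c \<in> lcs (U1 :: ('a \<Rightarrow> 'a \<Rightarrow> 'k) monoid) n" using Suc.IH w by blast
  have g: "(tm w y 1 :: 'a \<Rightarrow> 'a \<Rightarrow> 'k) \<in> carrier U1" using tm_carrier wy by blast
  have "tm x w c \<otimes>\<^bsub>U1\<^esub> tm w y 1 \<otimes>\<^bsub>U1\<^esub> inv\<^bsub>U1\<^esub> (tm x w c) \<otimes>\<^bsub>U1\<^esub> inv\<^bsub>U1\<^esub> (tm w y 1)
     \<in> (\<Union>h\<in>lcs (U1 :: ('a \<Rightarrow> 'a \<Rightarrow> 'k) monoid) n. \<Union>g\<in>carrier U1. {h \<otimes>\<^bsub>U1\<^esub> g \<otimes>\<^bsub>U1\<^esub> inv\<^bsub>U1\<^esub> h \<otimes>\<^bsub>U1\<^esub> inv\<^bsub>U1\<^esub> g})"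
    using h g by blast
  then have "tm x w c \<otimes>\<^bsub>U1\<^esub> tm w y 1 \<otimes>\<^bsub>U1\<^esub> inv\<^bsub>U1\<^esub> (tm x w c) \<otimes>\<^bsub>U1\<^esub> inv\<^bsub>U1\<^esub> (tm w y 1)
     \<in> lcs (U1 :: ('a \<Rightarrow> 'a \<Rightarrow> 'k) monoid) (Suc n)"
    unfolding lcs.simps by (rule generate.incl)
  then show ?case using tm_comm[OF xw wy, of c 1] by simp
qed

lemma derived_tm: "lc x y (2 ^ n) \<Longrightarrow> tm x y c \<in> (derived (U1 :: ('a::order \<Rightarrow> 'a \<Rightarrow> 'k::field) monoid) ^^ n) (carrier U1)"
proof (induction n arbitrary: x y c)
  case 0 then show ?case using tm_carrier by simp
next
  case (Suc n)
  have "2 ^ Suc n = 2 ^ n + (2 ^ n :: nat)" by simp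
  then have "lc x y (2 ^ n + 2 ^ n)" using Suc.prems by metis
  then obtain w where w: "lc x w (2 ^ n)" "lc w y (2 ^ n)" using lc_split by blast
  have xw: "x < w" and wy: "w < y" using w lc_less
    by (metis One_nat_def Suc_pred nat_zero_less_power_iff zero_less_numeral)+
  let ?D = "(derived (U1 :: ('a \<Rightarrow> 'a \<Rightarrow> 'k) monoid) ^^ n) (carrier U1)"
  have h: "tm x w c \<in> ?D" and g: "(tm w y 1 :: 'a \<Rightarrow> 'a \<Rightarrow> 'k) \<in> ?D" using Suc.IH w by blast+
  have "tm x w c \<otimes>\<^bsub>U1\<^esub> tm w y 1 \<otimes>\<^bsub>U1\<^esub> inv\<^bsub>U1\<^esub> (tm x w c) \<otimes>\<^bsub>U1\<^esub> inv\<^bsub>U1\<^esub> (tm w y 1)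
     \<in> derived_set U1 ?D"
    using h g by blast
  then have "tm x w c \<otimes>\<^bsub>U1\<^esub> tm w y 1 \<otimes>\<^bsub>U1\<^esub> inv\<^bsub>U1\<^esub> (tm x w c) \<otimes>\<^bsub>U1\<^esub> inv\<^bsub>U1\<^esub> (tm w y 1)
     \<in> derived U1 ?D"
    unfolding derived_def by (rule generate.incl)
  then show ?case using tm_comm[OF xw wy, of c 1] by simp
qed

abbreviation pchain :: "'a::order set \<Rightarrow> bool" where
  "pchain C \<equiv> Complete_Partial_Order.chain (\<le>) C"

lemma lc_chain: "lc (x::'a::order) y k \<Longrightarrow> \<exists>C::'a set. finite C \<and> C \<noteq> {} \<and> pchain C \<and> card C = Suc k"
proof -
  have "lc x y k \<Longrightarrow> \<exists>C::'a set. finite C \<and> pchain C \<and> card C = Suc k \<and> x \<in> C \<and> (\<forall>c\<in>C. x \<le> c)"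
  proof (induction k arbitrary: x)
    case 0
    have "pchain {x}" unfolding chain_def by simp
    then show ?case using 0 by (intro exI[of _ "{x}"]) simp
  next
    case (Suc k)
    then obtain z where z: "x < z" "lc z y k" by auto
    obtain C where C': "finite C \<and> pchain C \<and> card C = Suc k \<and> z \<in> C \<and> (\<forall>c\<in>C. z \<le> c)"
      using Suc.IH[OF z(2)] by (rule exE)
    then have C: "finite C" "pchain C" "card C = Suc k" "z \<in> C" "\<forall>c\<in>C. z \<le> c" by simp_all
    have xC: "x \<notin> C"
    proof
      assume "x \<in> C"
      then have "z \<le> x" using C(5) by simp
      then show False using z(1) by simp
    qed
    have ge: "x \<le> c" if "c \<in> insert x C" for c
    proof (cases "c = x")
      case True then show ?thesis by simp
    next
      case False
      then have "z \<le> c" using that C(5) by simp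
      then show ?thesis using z(1) by simp
    qed
    have "pchain (insert x C)" unfolding chain_def
    proof (intro ballI)
      fix a b assume a: "a \<in> insert x C" and b: "b \<in> insert x C"
      show "a \<le> b \<or> b \<le> a"
      proof (cases "a = x")
        case True then show ?thesis using ge b by simp
      next
        case False
        show ?thesis
        proof (cases "b = x")
          case True then show ?thesis using ge a by simp
        next
          case False
          then have "a \<in> C" "b \<in> C" using a b \<open>a \<noteq> x\<close> by simp_all
          then show ?thesis using C(2) unfolding chain_def by simp
        qed
      qed
    qed
    moreover have "card (insert x C) = Suc (Suc k)" using C(1,3) xC by simp
    moreover have "\<forall>c\<in>insert x C. x \<le> c" using ge by simp
    ultimately show ?case using C(1) by (intro exI[of _ "insert x C"]) simp
  qed
  note imp = this
  assume "lc x y k"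
  from imp[OF this] obtain C where "finite C \<and> pchain C \<and> card C = Suc k \<and> x \<in> C \<and> (\<forall>c\<in>C. x \<le> c)"
    by (elim exE)
  then show "\<exists>C::'a set. finite C \<and> C \<noteq> {} \<and> pchain C \<and> card C = Suc k" by (intro exI[of _ C]) auto
qed

lemma chain_least:
  assumes "finite C" "C \<noteq> {}" "pchain C"
  shows "\<exists>m\<in>C. \<forall>c\<in>C. m \<le> c"
  using assms
proof (induction C rule: finite_ne_induct)
  case (singleton x) then show ?case by auto
next
  case (insert a F)
  have "pchain F" using insert.prems by (rule chain_subset) auto
  then obtain m where m: "m \<in> F" "\<forall>c\<in>F. m \<le> c" using insert.IH by blast
  have "a \<le> m \<or> m \<le> a" using insert.prems m unfolding chain_def by auto
  then show ?case
  proof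
    assume "a \<le> m" then show ?thesis using m by (auto intro: order_trans)
  next
    assume "m \<le> a" then show ?thesis using m by auto
  qed
qed

lemma chain_lc:
  "finite C \<Longrightarrow> pchain C \<Longrightarrow> card C = Suc n \<Longrightarrow> \<exists>x\<in>C. \<exists>y. lc x y n"
proof (induction n arbitrary: C)
  case 0
  then obtain x where "C = {x}" using card_1_singletonE by auto
  then show ?case by auto
next
  case (Suc n)
  have ne: "C \<noteq> {}" using Suc.prems by auto
  obtain m where m: "m \<in> C" "\<forall>c\<in>C. m \<le> c" using chain_least[OF Suc.prems(1) ne Suc.prems(2)] by blast
  have f: "finite (C - {m})" using Suc.prems by simp
  have p: "pchain (C - {m})" using Suc.prems(2) by (rule chain_subset) simp
  have c: "card (C - {m}) = Suc n" using Suc.prems m by simp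
  obtain x where x: "x \<in> C - {m}" "\<exists>y. lc x y n" using Suc.IH[OF f p c] by (elim bexE)
  then obtain y where xy: "x \<in> C - {m}" "lc x y n" by (elim exE)
  then have "m \<le> x" "m \<noteq> x" using m by auto
  then have "m < x" by simp
  then have "lc m y (Suc n)" using xy(2) by (simp only: lc.simps) blast
  then show ?case using m(1) by blast
qed

definition LS :: "'a::order itself \<Rightarrow> enat set" where
  "LS X = {enat (card C - 1) | C :: 'a set. finite C \<and> C \<noteq> {} \<and> pchain C}"

lemma pl_LS: "poset_length X = Sup (LS X)" unfolding poset_length_def LS_def by simp

lemma lc_bound: "lc (x::'a::order) y k \<Longrightarrow> enat k \<le> poset_length (X :: 'a itself)"
proof -
  assume "lc x y k"
  then obtain C :: "'a set" where "finite C" "C \<noteq> {}" "pchain C" "card C = Suc k" using lc_chain by blast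
  then have "enat k \<in> LS X" unfolding LS_def by force
  then show ?thesis unfolding pl_LS by (rule Sup_upper)
qed

lemma LS_lc: "e \<in> LS (X :: 'a::order itself) \<Longrightarrow> \<exists>n x y. e = enat n \<and> lc (x::'a) y n"
proof -
  assume "e \<in> LS X"
  then obtain C :: "'a set" where C: "e = enat (card C - 1)" "finite C" "C \<noteq> {}" "pchain C"
    unfolding LS_def by blast
  then have "card C = Suc (card C - 1)" by (simp add: card_gt_0_iff)
  then show ?thesis using chain_lc[OF C(2) C(4)] C(1) by blast
qed

lemma pl_fin:
  assumes "poset_length (X :: 'a::order itself) \<noteq> \<infinity>"
  shows "\<exists>L. poset_length X = enat L \<and> (\<exists>x y. lc (x::'a) y L) \<and> (\<forall>x y k. lc (x::'a) y k \<longrightarrow> k \<le> L)"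
proof -
  have "enat (card {undefined::'a} - 1) \<in> LS X" unfolding LS_def
    by (rule CollectI, rule exI[of _ "{undefined}"]) (auto simp: chain_def)
  then have ne: "LS X \<noteq> {}" by auto
  have fin: "finite (LS X)" using assms ne unfolding pl_LS Sup_enat_def by (auto split: if_splits)
  then have "Sup (LS X) = Max (LS X)" using ne unfolding Sup_enat_def by simp
  moreover have "Max (LS X) \<in> LS X" using fin ne by (rule Max_in)
  ultimately obtain L x y where L: "poset_length X = enat L" "lc (x::'a) y L"
    unfolding pl_LS using LS_lc by metis
  moreover have "\<forall>x y k. lc (x::'a) y k \<longrightarrow> k \<le> L" using lc_bound L(1) by (metis enat_ord_simps(1))
  ultimately show ?thesis by blast
qed

lemma pl_inf:
  assumes "poset_length (X :: 'a::order itself) = \<infinity>"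
  shows "\<exists>x y. lc (x::'a) y n"
proof (cases n)
  case 0 then show ?thesis by auto
next
  case (Suc m)
  have "\<exists>e\<in>LS X. \<not> e \<le> enat n"
  proof (rule ccontr)
    assume "\<not> ?thesis"
    then have "Sup (LS X) \<le> enat n" by (auto intro: Sup_least)
    then show False using assms unfolding pl_LS by simp
  qed
  then obtain e where "e \<in> LS X" "\<not> e \<le> enat n" by blast
  then obtain k x y where "\<not> enat k \<le> enat n" "lc (x::'a) y k" using LS_lc by metis
  then have "lc x y n" using lc_mono[of x y k n] Suc by simp
  then show ?thesis by blast
qed

lemma Gam_triv:
  assumes "\<not> (\<exists>x y. lc (x::'a::order) y k)"
  shows "(Gam k :: ('a \<Rightarrow> 'a \<Rightarrow> 'k::field) set) \<subseteq> {fi_delta}"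
proof
  fix a :: "'a \<Rightarrow> 'a \<Rightarrow> 'k" assume a: "a \<in> Gam k"
  have "a x y = fi_delta x y" for x y
  proof (cases "x = y")
    case True then show ?thesis using a Gam_sub carrier_diag by (fastforce simp: fi_delta_def)
  next
    case False then show ?thesis using a assms unfolding Gam_def fi_delta_def by auto
  qed
  then show "a \<in> {fi_delta}" by auto
qed

lemma ceil_log:
  fixes L :: nat
  shows "int (LEAST n. Suc L \<le> 2 ^ n) = \<lceil>log 2 (real (L + 1))\<rceil>"
proof -
  define K where "K = (LEAST n. Suc L \<le> 2 ^ n)"
  have ex: "Suc L \<le> 2 ^ L" by (induction L) auto
  have K1: "Suc L \<le> 2 ^ K" unfolding K_def by (rule LeastI[of _ L]) (rule ex)
  have K2: "\<And>j. j < K \<Longrightarrow> 2 ^ j < Suc L" unfolding K_def using not_less_Least by fastforce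
  have up: "log 2 (real (L + 1)) \<le> real K"
  proof -
    have "real (Suc L) \<le> real (2 ^ K)" using K1 by (simp only: of_nat_le_iff)
    then have "real (Suc L) \<le> 2 ^ K" by simp
    then show ?thesis using log_of_power_le[of "L + 1" 2 K] by simp
  qed
  have low: "real K - 1 < log 2 (real (L + 1))"
  proof (cases K)
    case 0
    have "0 \<le> log 2 (real (L + 1))" by (subst zero_le_log_cancel_iff) auto
    moreover have "real K - 1 = -1" using 0 by simp
    ultimately show ?thesis by linarith
  next
    case (Suc j)
    have "2 ^ j < Suc L" using K2 Suc by simp
    then have "real (2 ^ j) < real (L + 1)" by linarith
    then have "2 powr (real j) < real (L + 1)" by (simp add: powr_realpow)
    then have "real j < log 2 (real (L + 1))" by (subst less_log_iff) auto
    then show ?thesis using Suc by simp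
  qed
  show ?thesis unfolding K_def[symmetric]
    by (rule ceiling_unique[symmetric]) (use up low in auto)
qed

lemma one_lcs: "fi_delta \<in> lcs (U1 :: ('a::order \<Rightarrow> 'a \<Rightarrow> 'k::field) monoid) n"
proof (cases n)
  case 0
  interpret G: group "U1 :: ('a \<Rightarrow> 'a \<Rightarrow> 'k) monoid" by (rule group_U1)
  show ?thesis using 0 G.one_closed by (simp add: U1_one)
next
  case (Suc m)
  show ?thesis unfolding Suc lcs.simps using generate.one[of "U1 :: ('a \<Rightarrow> 'a \<Rightarrow> 'k) monoid"]
    by (simp add: U1_one)
qed

lemma one_der: "fi_delta \<in> (derived (U1 :: ('a::order \<Rightarrow> 'a \<Rightarrow> 'k::field) monoid) ^^ n) (carrier U1)"
proof -
  interpret G: group "U1 :: ('a \<Rightarrow> 'a \<Rightarrow> 'k) monoid" by (rule group_U1)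
  show ?thesis using subgroup.one_closed[OF G.exp_of_derived_is_subgroup[OF G.subgroup_self, of n]]
    by (simp add: U1_one)
qed

lemma lcs_iff: "lcs (U1 :: ('a::order \<Rightarrow> 'a \<Rightarrow> 'k::field) monoid) n = {\<one>\<^bsub>U1\<^esub>}
    \<longleftrightarrow> \<not> (\<exists>x y. lc (x::'a) y (Suc n))"
proof
  assume h: "lcs (U1 :: ('a \<Rightarrow> 'a \<Rightarrow> 'k) monoid) n = {\<one>\<^bsub>U1\<^esub>}"
  show "\<not> (\<exists>x y. lc (x::'a) y (Suc n))"
  proof
    assume "\<exists>x y. lc (x::'a) y (Suc n)"
    then obtain x y :: 'a where "lc x y (Suc n)" by blast
    then have "tm x y (1::'k) \<in> lcs (U1 :: ('a \<Rightarrow> 'a \<Rightarrow> 'k) monoid) n" "x < y"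
      by (rule lcs_tm, rule lc_less)
    then have "tm x y (1::'k) \<in> lcs (U1 :: ('a \<Rightarrow> 'a \<Rightarrow> 'k) monoid) n" "x \<noteq> y" by simp_all
    then show False using h tm_ne[where 'k='k, of x y] by (simp add: U1_one)
  qed
next
  assume h: "\<not> (\<exists>x y. lc (x::'a) y (Suc n))"
  have "lcs (U1 :: ('a \<Rightarrow> 'a \<Rightarrow> 'k) monoid) n \<subseteq> {fi_delta}"
    using lcs_Gam Gam_triv[OF h] by blast
  then show "lcs (U1 :: ('a \<Rightarrow> 'a \<Rightarrow> 'k) monoid) n = {\<one>\<^bsub>U1\<^esub>}"
    using one_lcs by (auto simp: U1_one)
qed

lemma der_iff: "(derived (U1 :: ('a::order \<Rightarrow> 'a \<Rightarrow> 'k::field) monoid) ^^ n) (carrier U1) = {\<one>\<^bsub>U1\<^esub>}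
    \<longleftrightarrow> \<not> (\<exists>x y. lc (x::'a) y (2 ^ n))"
proof
  assume h: "(derived (U1 :: ('a \<Rightarrow> 'a \<Rightarrow> 'k) monoid) ^^ n) (carrier U1) = {\<one>\<^bsub>U1\<^esub>}"
  show "\<not> (\<exists>x y. lc (x::'a) y (2 ^ n))"
  proof
    assume "\<exists>x y. lc (x::'a) y (2 ^ n)"
    then obtain x y :: 'a where xy: "lc x y (2 ^ n)" by blast
    then have "tm x y (1::'k) \<in> (derived (U1 :: ('a \<Rightarrow> 'a \<Rightarrow> 'k) monoid) ^^ n) (carrier U1)"
      by (rule derived_tm)
    moreover have "x \<noteq> y"
    proof -
      have "2 ^ n = Suc (2 ^ n - 1)" by simp
      then have "lc x y (Suc (2 ^ n - 1))" using xy by metis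
      then have "x < y" by (rule lc_less)
      then show ?thesis by simp
    qed
    ultimately show False using h tm_ne[where 'k='k, of x y] by (simp add: U1_one)
  qed
next
  assume h: "\<not> (\<exists>x y. lc (x::'a) y (2 ^ n))"
  have "(derived (U1 :: ('a \<Rightarrow> 'a \<Rightarrow> 'k) monoid) ^^ n) (carrier U1) \<subseteq> {fi_delta}"
    using derived_Gam Gam_triv[OF h] by blast
  then show "(derived (U1 :: ('a \<Rightarrow> 'a \<Rightarrow> 'k) monoid) ^^ n) (carrier U1) = {\<one>\<^bsub>U1\<^esub>}"
    using one_der by (auto simp: U1_one)
qed

theorem corollary1p7:
  fixes X :: "'a::order itself" and K :: "'k::field itself"
  defines "G \<equiv> (U1 :: ('a \<Rightarrow> 'a \<Rightarrow> 'k) monoid)"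
  shows "(solvable G \<longleftrightarrow> nilpotent_group G)
       \<and> (nilpotent_group G \<longleftrightarrow> poset_length X \<noteq> \<infinity>)
       \<and> (poset_length X \<noteq> \<infinity> \<longrightarrow>
            nilpotency_class G = the_enat (poset_length X)
          \<and> int (derived_length G) = \<lceil>log 2 (real (the_enat (poset_length X) + 1))\<rceil>)"
proof -
  interpret G: group G unfolding G_def by (rule group_U1)
  have solv: "solvable G \<longleftrightarrow> (\<exists>n. \<not> (\<exists>x y. lc (x::'a) y (2 ^ n)))"
    unfolding G.solvable_iff_trivial_derived_seq unfolding G_def using der_iff by blast
  have nil: "nilpotent_group G \<longleftrightarrow> (\<exists>n. \<not> (\<exists>x y. lc (x::'a) y (Suc n)))"
    unfolding nilpotent_group_def G_def using lcs_iff by blast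
  show ?thesis
  proof (cases "poset_length X = \<infinity>")
    case True
    have "\<not> solvable G" unfolding solv using pl_inf[OF True] by blast
    moreover have "\<not> nilpotent_group G" unfolding nil using pl_inf[OF True] by blast
    ultimately show ?thesis using True by simp
  next
    case False
    obtain L where L: "poset_length X = enat L" "\<exists>x y. lc (x::'a) y L"
      "\<forall>x y k. lc (x::'a) y k \<longrightarrow> k \<le> L" using pl_fin[OF False] by blast
    have ex: "Suc L \<le> 2 ^ L" by (induction L) auto
    have s: "solvable G" unfolding solv
    proof (intro exI notI)
      assume "\<exists>x y. lc (x::'a) y (2 ^ L)"
      then obtain x y :: 'a where "lc x y (2 ^ L)" by (elim exE)
      then have "2 ^ L \<le> L" using L(3) by simp
      then show False using ex by simp
    qed
    have n: "nilpotent_group G" unfolding nil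
    proof (intro exI notI)
      assume "\<exists>x y. lc (x::'a) y (Suc L)"
      then obtain x y :: 'a where "lc x y (Suc L)" by (elim exE)
      then have "Suc L \<le> L" using L(3) by blast
      then show False by simp
    qed
    have lcsI: "lcs G m = {\<one>\<^bsub>G\<^esub>} \<longleftrightarrow> L \<le> m" for m
    proof -
      have "lcs G m = {\<one>\<^bsub>G\<^esub>} \<longleftrightarrow> \<not> (\<exists>x y. lc (x::'a) y (Suc m))"
        unfolding G_def by (rule lcs_iff)
      also have "\<dots> \<longleftrightarrow> L \<le> m"
      proof
        assume h: "\<not> (\<exists>x y. lc (x::'a) y (Suc m))"
        show "L \<le> m"
        proof (rule ccontr)
          assume "\<not> L \<le> m"
          then have "Suc m \<le> L" by simp
          obtain x y :: 'a where "lc x y L" using L(2) by (elim exE)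
          then have "lc x y (Suc m)" using lc_mono[of x y L "Suc m"] \<open>Suc m \<le> L\<close> by simp
          then show False using h by blast
        qed
      next
        assume "L \<le> m"
        show "\<not> (\<exists>x y. lc (x::'a) y (Suc m))"
        proof
          assume "\<exists>x y. lc (x::'a) y (Suc m)"
          then obtain x y :: 'a where "lc x y (Suc m)" by (elim exE)
          then have "Suc m \<le> L" using L(3) by blast
          then show False using \<open>L \<le> m\<close> by simp
        qed
      qed
      finally show ?thesis .
    qed
    have derI: "(derived G ^^ m) (carrier G) = {\<one>\<^bsub>G\<^esub>} \<longleftrightarrow> Suc L \<le> 2 ^ m" for m
    proof -
      have "(derived G ^^ m) (carrier G) = {\<one>\<^bsub>G\<^esub>} \<longleftrightarrow> \<not> (\<exists>x y. lc (x::'a) y (2 ^ m))"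
        unfolding G_def by (rule der_iff)
      also have "\<dots> \<longleftrightarrow> Suc L \<le> 2 ^ m"
      proof
        assume h: "\<not> (\<exists>x y. lc (x::'a) y (2 ^ m))"
        show "Suc L \<le> 2 ^ m"
        proof (rule ccontr)
          assume "\<not> Suc L \<le> 2 ^ m"
          then have "2 ^ m \<le> L" by simp
          moreover have "1 \<le> (2::nat) ^ m" by simp
          obtain x y :: 'a where "lc x y L" using L(2) by (elim exE)
          then have "lc x y (2 ^ m)" using lc_mono[of x y L "2 ^ m"] \<open>2 ^ m \<le> L\<close> \<open>1 \<le> (2::nat) ^ m\<close> by blast
          then show False using h by blast
        qed
      next
        assume "Suc L \<le> 2 ^ m"
        show "\<not> (\<exists>x y. lc (x::'a) y (2 ^ m))"
        proof
          assume "\<exists>x y. lc (x::'a) y (2 ^ m)"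
          then obtain x y :: 'a where "lc x y (2 ^ m)" by (elim exE)
          then have "2 ^ m \<le> L" using L(3) by blast
          then show False using \<open>Suc L \<le> 2 ^ m\<close> by simp
        qed
      qed
      finally show ?thesis .
    qed
    have nc: "nilpotency_class G = L"
      unfolding nilpotency_class_def lcsI by (rule Least_equality) auto
    have dl: "derived_length G = (LEAST n. Suc L \<le> 2 ^ n)"
      unfolding derived_length_def derI by simp
    show ?thesis using s n nc dl L(1) ceil_log[of L] by simp
  qed
qed

end
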